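(* Let $\mathcal{T}_0$ be a triangulation of a finite point set $\mathcal{P}$ in the plane and let $F=\langle f_1,\ldots,f_r\rangle$ be a valid sequence of flips with $\mathcal{T}_0 \xrightarrow{F} \mathcal{T}_r$. Let $\pi(F)$ be a permutation of the flips in $F$ that is a topological sorting of the DAG $\mathcal{D}_F$. Then $\pi(F)$ is a valid sequence of flips with respect to $\mathcal{T}_0$ and $\mathcal{T}_0 \xrightarrow{\pi(F)} \mathcal{T}_r$.
   Context: A triangulation of a finite point set $\mathcal{P}$ in the plane is a partition of the convex hull of $\mathcal{P}$ into triangles whose vertex set is $\mathcal{P}$. For an interior edge $e$ of a triangulation $\mathcal{T}$, the quadrilateral associated with $e$ is the union of the two triangles of $\mathcal{T}$ sharing $e$. A flip $f$ with underlying edge $\epsilon(f)=e$ is admissible in $\mathcal{T}$ if $e\in\mathcal{T}$ and its associated quadrilateral is convex; performing it replaces $e$ by the other diagonal $\phi(f)$ of that quadrilateral. Two distinct edges share a triangle in $\mathcal{T}$ if they are edges of the same triangle of $\mathcal{T}$. A sequence $F=\langle f_1,\ldots,f_r\rangle$ is valid with respect to $\mathcal{T}$ if there are triangulations $\mathcal{T}_0=\mathcal{T},\mathcal{T}_1,\ldots,\mathcal{T}_r$ such that $f_i$ is admissible in $\mathcal{T}_{i-1}$ and performing it yields $\mathcal{T}_i$; then we write $\mathcal{T}\xrightarrow{F}\mathcal{T}_r$. Flips in a sequence are distinct objects even if they have the same underlying edge. For $1\le i<j\le r$, flip $f_j$ is adjacent to $f_i$ (written $f_i\to f_j$) if (1)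 either $\phi(f_i)=\epsilon(f_j)$ or $\phi(f_i)$ and $\epsilon(f_j)$ share a triangle in $\mathcal{T}_{j-1}$, and (2) there is no $p$ with $i<p<j$ and $\epsilon(f_p)=\phi(f_i)$. $\mathcal{D}_F$ is the directed acyclic graph whose nodes are the flips of $F$ and whose arcs are the pairs $f_i\to f_j$. *)

theory Defs
  imports "HOL-Analysis.Analysis"
begin

type_synonym pt = "real \<times> real"

definition is_triangulation :: "pt set \<Rightarrow> pt set set \<Rightarrow> bool" where
  "is_triangulation P T \<longleftrightarrow>
     finite P \<and>
     (\<forall>t\<in>T. t \<subseteq> P \<and> card t = 3 \<and> \<not> affine_dependent t) \<and>
     (\<Union>t\<in>T. convex hull t) = convex hull P \<and>
     (\<forall>t\<in>T. \<forall>t'\<in>T. convex hull t \<inter> convex hull t' = convex hull (t \<inter> t')) \<and>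
     \<Union>T = P"

definition convex_quad :: "pt \<Rightarrow> pt \<Rightarrow> pt \<Rightarrow> pt \<Rightarrow> bool" where
  "convex_quad a b c d \<longleftrightarrow>
     convex (convex hull {a, b, c} \<union> convex hull {a, b, d}) \<and>
     (\<forall>x\<in>{a, b, c, d}. x \<notin> convex hull ({a, b, c, d} - {x}))"

definition flip_step :: "pt set set \<Rightarrow> pt set \<Rightarrow> pt set set \<Rightarrow> bool" where
  "flip_step T e T' \<longleftrightarrow>
     (\<exists>a b c d. e = {a, b} \<and> a \<noteq> b \<and> c \<noteq> d \<and>
        {a, b, c} \<in> T \<and> {a, b, d} \<in> T \<and> convex_quad a b c d \<and>
        T' = (T - {{a, b, c}, {a, b, d}}) \<union> {{a, c, d}, {b, c, d}})"

definition new_diag :: "pt set set \<Rightarrow> pt set \<Rightarrow> pt set" where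
  "new_diag T e = (THE g. \<exists>a b c d. e = {a, b} \<and> a \<noteq> b \<and> c \<noteq> d \<and>
        {a, b, c} \<in> T \<and> {a, b, d} \<in> T \<and> g = {c, d})"

text \<open>A flip sequence F (list of underlying edges) is valid w.r.t. T0 with intermediate
  triangulations Ts = [T_0, ..., T_r] (0-based: flip F!i is performed in Ts!i).\<close>
definition flip_run :: "pt set \<Rightarrow> pt set set \<Rightarrow> pt set list \<Rightarrow> pt set set list \<Rightarrow> bool" where
  "flip_run P T0 F Ts \<longleftrightarrow>
     length Ts = length F + 1 \<and> Ts ! 0 = T0 \<and>
     (\<forall>i < length Ts. is_triangulation P (Ts ! i)) \<and>
     (\<forall>i < length F. flip_step (Ts ! i) (F ! i) (Ts ! (i + 1)))"

definition share_triangle :: "pt set set \<Rightarrow> pt set \<Rightarrow> pt set \<Rightarrow> bool" where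
  "share_triangle T e g \<longleftrightarrow> e \<noteq> g \<and> (\<exists>t\<in>T. e \<subseteq> t \<and> g \<subseteq> t)"

definition dag_arc :: "pt set list \<Rightarrow> pt set set list \<Rightarrow> nat \<Rightarrow> nat \<Rightarrow> bool" where
  "dag_arc F Ts i j \<longleftrightarrow>
     i < j \<and> j < length F \<and>
     (new_diag (Ts ! i) (F ! i) = F ! j \<or>
      share_triangle (Ts ! j) (new_diag (Ts ! i) (F ! i)) (F ! j)) \<and>
     \<not> (\<exists>p. i < p \<and> p < j \<and> F ! p = new_diag (Ts ! i) (F ! i))"

end

theory Submission
  imports Defs
begin

definition cross :: "pt \<Rightarrow> pt \<Rightarrow> real" where
  "cross u v = fst u * snd v - snd u * fst v"

lemma cross_zero_collinear:
  assumes "cross (b - a) (c - a) = 0"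
  shows "collinear {a,b,c}"
proof (cases "a = b")
  case True then show ?thesis by (simp add: collinear_2)
next
  case False
  define u where "u = b - a"
  have u0: "u \<noteq> 0" using False u_def by auto
  define l where "l = (if fst u \<noteq> 0 then fst (c-a) / fst u else snd (c-a) / snd u)"
  obtain u1 u2 where uu: "u = (u1,u2)" by (cases u)
  obtain w1 w2 where ww: "c - a = (w1,w2)" by (cases "c - a")
  have cz: "u1 * w2 - u2 * w1 = 0" using assms unfolding cross_def u_def[symmetric] uu ww by simp
  have "c - a = l *\<^sub>R u"
  proof (cases "u1 = 0")
    case True
    then have "u2 \<noteq> 0" using u0 uu by (auto simp: zero_prod_def)
    then have "w1 = 0" using cz True by simp
    then show ?thesis using True \<open>u2 \<noteq> 0\<close> unfolding l_def uu ww by simp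
  next
    case False
    then have "w2 = u2 * w1 / u1" using cz by (simp add: field_simps)
    then show ?thesis using False unfolding l_def uu ww by (simp add: field_simps)
  qed
  then have "collinear {0, b - a, c - a}" using collinear_lemma u_def by blast
  then have "collinear {b, a, c}" by (subst collinear_3) auto
  then show ?thesis by (simp add: insert_commute)
qed

lemma seg_cross:
  assumes "p \<in> closed_segment a b"
  shows "cross (b - a) (p - a) = 0"
proof -
  obtain u where p: "p = (1 - u) *\<^sub>R a + u *\<^sub>R b" using assms unfolding in_segment by blast
  show ?thesis unfolding p cross_def by (simp add: algebra_simps)
qed

lemma tri_distinct:
  assumes "card {a,b,c} = 3" shows "a \<noteq> b" "a \<noteq> c" "b \<noteq> c"
  using assms by (auto simp: card_insert_if split: if_splits)

lemma tri_cross: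
  assumes "card {a,b,c} = 3" "\<not> affine_dependent {a,b,c}"
  shows "cross (b - a) (c - a) \<noteq> 0"
  using assms tri_distinct[OF assms(1)] cross_zero_collinear collinear_3_eq_affine_dependent
  by blast

lemma cramer:
  fixes a b c d :: pt
  assumes "cross (b - a) (c - a) \<noteq> 0"
  defines "be \<equiv> cross (d - a) (c - a) / cross (b - a) (c - a)"
      and "ga \<equiv> cross (b - a) (d - a) / cross (b - a) (c - a)"
  shows "d = (1 - be - ga) *\<^sub>R a + be *\<^sub>R b + ga *\<^sub>R c"
proof -
  obtain a1 a2 where a: "a = (a1,a2)" by (cases a)
  obtain b1 b2 where b: "b = (b1,b2)" by (cases b)
  obtain c1 c2 where c: "c = (c1,c2)" by (cases c)
  obtain d1 d2 where d: "d = (d1,d2)" by (cases d)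
  define s where "s = (b1-a1)*(c2-a2) - (b2-a2)*(c1-a1)"
  have s0: "s \<noteq> 0" using assms(1) unfolding s_def cross_def a b c by simp
  have be: "be = ((d1-a1)*(c2-a2) - (d2-a2)*(c1-a1)) / s" unfolding be_def s_def cross_def a b c d by simp
  have ga: "ga = ((b1-a1)*(d2-a2) - (b2-a2)*(d1-a1)) / s" unfolding ga_def s_def cross_def a b c d by simp
  define X where "X = (d1-a1)*(c2-a2) - (d2-a2)*(c1-a1)"
  define Y where "Y = (b1-a1)*(d2-a2) - (b2-a2)*(d1-a1)"
  have p1: "X * (b1 - a1) + Y * (c1 - a1) = (d1 - a1) * s"
    unfolding X_def Y_def s_def by algebra
  have p2: "X * (b2 - a2) + Y * (c2 - a2) = (d2 - a2) * s"
    unfolding X_def Y_def s_def by algebra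
  have r1: "(1 - be - ga) * a1 + be * b1 + ga * c1 = a1 + (X * (b1 - a1) + Y * (c1 - a1)) / s"
    unfolding be ga X_def[symmetric] Y_def[symmetric] by (simp add: diff_divide_distrib add_divide_distrib algebra_simps)
  have r2: "(1 - be - ga) * a2 + be * b2 + ga * c2 = a2 + (X * (b2 - a2) + Y * (c2 - a2)) / s"
    unfolding be ga X_def[symmetric] Y_def[symmetric] by (simp add: diff_divide_distrib add_divide_distrib algebra_simps)
  have e1: "d1 = (1 - be - ga) * a1 + be * b1 + ga * c1"
    unfolding r1 p1 using s0 by simp
  have e2: "d2 = (1 - be - ga) * a2 + be * b2 + ga * c2"
    unfolding r2 p2 using s0 by simp
  show ?thesis using e1 e2 unfolding a b c d by simp
qed

lemma tri_mem:
  assumes "is_triangulation P T" "t \<in> T"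
  shows "t \<subseteq> P" "card t = 3" "\<not> affine_dependent t"
  using assms unfolding is_triangulation_def by auto

lemma tri_int:
  assumes "is_triangulation P T" "t \<in> T" "t' \<in> T"
  shows "convex hull t \<inter> convex hull t' = convex hull (t \<inter> t')"
  using assms unfolding is_triangulation_def by auto

lemma cross_lin:
  "cross u (x *\<^sub>R v + y *\<^sub>R w) = x * cross u v + y * cross u w"
  unfolding cross_def by (simp add: algebra_simps)

lemma small_coef:
  fixes x y :: real
  shows "0 \<le> (1 - 1 / (2 + 2*\<bar>x\<bar> + 2*\<bar>y\<bar>)) / 2 + 1 / (2 + 2*\<bar>x\<bar> + 2*\<bar>y\<bar>) * x"
proof -
  define D where "D = 2 + 2*\<bar>x\<bar> + 2*\<bar>y\<bar>"
  have D: "D > 0" unfolding D_def by (simp add: add_pos_nonneg)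
  have "(1 - 1 / D) / 2 + 1 / D * x = (D - 1 + 2 * x) / (2 * D)"
    using D by (simp add: field_simps)
  moreover have "D - 1 + 2 * x \<ge> 0" unfolding D_def by (cases "x \<ge> 0") auto
  ultimately show ?thesis using D unfolding D_def by simp
qed

lemma same_side_false:
  assumes T: "is_triangulation P T" and abc: "{a,b,c} \<in> T" and abd: "{a,b,d} \<in> T"
    and cd: "c \<noteq> d"
    and pos: "cross (b - a) (c - a) * cross (b - a) (d - a) > 0"
  shows False
proof -
  have c3: "card {a,b,c} = 3" and d3: "card {a,b,d} = 3"
    using tri_mem[OF T abc] tri_mem[OF T abd] by auto
  note dc = tri_distinct[OF c3] and dd = tri_distinct[OF d3]
  have "{a,b,c} \<inter> {a,b,d} = {a,b}" using dc dd cd by auto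
  then have int: "convex hull {a,b,c} \<inter> convex hull {a,b,d} = convex hull {a,b}"
    using tri_int[OF T abc abd] by simp
  define sc where "sc = cross (b - a) (c - a)"
  define sd where "sd = cross (b - a) (d - a)"
  have sc0: "sc \<noteq> 0" using pos sc_def by auto
  define be where "be = cross (d - a) (c - a) / sc"
  define ga where "ga = sd / sc"
  define al where "al = 1 - be - ga"
  have deq: "d = al *\<^sub>R a + be *\<^sub>R b + ga *\<^sub>R c"
    using cramer[of b a c d] sc0 unfolding al_def be_def ga_def sc_def sd_def by simp
  have ga0: "ga > 0" using pos unfolding ga_def sc_def sd_def
    by (auto simp: zero_less_mult_iff divide_pos_pos divide_neg_neg)
  define t where "t = 1 / (2 + 2*\<bar>al\<bar> + 2*\<bar>be\<bar>)"
  have t0: "t > 0" unfolding t_def by (simp add: add_pos_nonneg)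
  have t1: "t \<le> 1" unfolding t_def by (simp add: field_simps)
  define q where "q = ((1 - t)/2) *\<^sub>R a + ((1 - t)/2) *\<^sub>R b + t *\<^sub>R d"
  have qd: "q \<in> convex hull {a,b,d}"
    unfolding convex_hull_3 q_def using t0 t1
    by (intro CollectI exI[of _ "(1 - t)/2"] exI[of _ "(1 - t)/2"] exI[of _ t]) simp
  have q2: "q = ((1 - t)/2 + t * al) *\<^sub>R a + ((1 - t)/2 + t * be) *\<^sub>R b + (t * ga) *\<^sub>R c"
    unfolding q_def deq by (simp add: algebra_simps)
  have n1: "0 \<le> (1 - t)/2 + t * al" unfolding t_def by (rule small_coef)
  have n2: "0 \<le> (1 - t)/2 + t * be" unfolding t_def using small_coef[of be al] by (simp add: add_ac)
  have sum: "((1 - t)/2 + t * al) + ((1 - t)/2 + t * be) + t * ga = 1"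
    unfolding al_def by (simp add: algebra_simps)
  have qc: "q \<in> convex hull {a,b,c}"
    unfolding convex_hull_3 q2 using n1 n2 sum t0 ga0 by (intro CollectI exI[of _ "(1 - t)/2 + t * al"] exI[of _ "(1 - t)/2 + t * be"] exI[of _ "t * ga"]) simp
  have "q \<in> closed_segment a b" using qc qd int segment_convex_hull by blast
  then have z: "cross (b - a) (q - a) = 0" by (rule seg_cross)
  have aa: "t *\<^sub>R a + (((1 - t) / 2) *\<^sub>R a + ((1 - t) / 2) *\<^sub>R a) = a"
  proof -
    have "t *\<^sub>R a + (((1 - t) / 2) *\<^sub>R a + ((1 - t) / 2) *\<^sub>R a) = (t + ((1 - t) / 2 + (1 - t) / 2)) *\<^sub>R a"
      by (simp only: scaleR_add_left)
    also have "\<dots> = a" by simp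
    finally show ?thesis .
  qed
  have qa: "q - a = ((1 - t)/2) *\<^sub>R (b - a) + t *\<^sub>R (d - a)"
    unfolding q_def by (simp add: algebra_simps aa)
  have "cross (b - a) (q - a) = t * sd"
    unfolding qa sd_def by (simp add: cross_def field_simps)
  then show False using z t0 pos unfolding sd_def by simp
qed

lemma three_tri_false:
  assumes T: "is_triangulation P T" and x: "{a,b,x} \<in> T" and y: "{a,b,y} \<in> T" and z: "{a,b,z} \<in> T"
    and "x \<noteq> y" "x \<noteq> z" "y \<noteq> z"
  shows False
proof -
  have sx: "cross (b - a) (x - a) \<noteq> 0" using tri_cross tri_mem[OF T x] by blast
  have sy: "cross (b - a) (y - a) \<noteq> 0" using tri_cross tri_mem[OF T y] by blast
  have sz: "cross (b - a) (z - a) \<noteq> 0" using tri_cross tri_mem[OF T z] by blast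
  have "cross (b - a) (x - a) * cross (b - a) (y - a) > 0 \<or> cross (b - a) (x - a) * cross (b - a) (z - a) > 0
      \<or> cross (b - a) (y - a) * cross (b - a) (z - a) > 0"
    using sx sy sz by (auto simp: zero_less_mult_iff linorder_neq_iff)
  then show False
    using same_side_false[OF T x y] same_side_false[OF T x z] same_side_false[OF T y z] assms(5-7) by blast
qed

lemma quad_swap_ab: "convex_quad a b c d \<Longrightarrow> convex_quad b a c d"
  unfolding convex_quad_def by (simp add: insert_commute)

lemma quad_swap_cd: "convex_quad a b c d \<Longrightarrow> convex_quad a b d c"
  unfolding convex_quad_def by (simp add: insert_commute Un_commute)

lemma quad_pos:
  assumes "convex_quad a b c d" "x \<in> {a,b,c,d}" "S \<subseteq> {a,b,c,d} - {x}"
  shows "x \<notin> convex hull S"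
  using assms hull_mono unfolding convex_quad_def by blast

lemma hullL:
  assumes "x \<in> convex hull {a,c,d}"
  shows "\<exists>al. 0 \<le> al \<and> cross (d - c) (x - c) = al * cross (d - c) (a - c) \<and>
               (al = 0 \<longrightarrow> x \<in> closed_segment c d)"
proof -
  obtain u v w where uvw: "0 \<le> u" "0 \<le> v" "0 \<le> w" "u + v + w = 1"
    and x: "x = u *\<^sub>R a + v *\<^sub>R c + w *\<^sub>R d"
    using assms unfolding convex_hull_3 by blast
  have v: "v = 1 - u - w" using uvw by simp
  have xc: "x - c = u *\<^sub>R (a - c) + w *\<^sub>R (d - c)" unfolding x v by (simp add: algebra_simps)
  have L: "cross (d - c) (x - c) = u * cross (d - c) (a - c)" unfolding xc by (simp add: cross_def algebra_simps)
  have "u = 0 \<longrightarrow> x \<in> closed_segment c d"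
  proof
    assume "u = 0"
    then have "x = (1 - w) *\<^sub>R c + w *\<^sub>R d" "w \<le> 1" using x v uvw by auto
    then show "x \<in> closed_segment c d" unfolding in_segment using uvw by blast
  qed
  then show ?thesis using L uvw by blast
qed

lemma segL:
  assumes "x \<in> closed_segment b c"
  shows "\<exists>mu. 0 \<le> mu \<and> mu \<le> 1 \<and> x = (1 - mu) *\<^sub>R b + mu *\<^sub>R c \<and>
            cross (d - c) (x - c) = (1 - mu) * cross (d - c) (b - c)"
proof -
  obtain mu where mu: "0 \<le> mu" "mu \<le> 1" "x = (1 - mu) *\<^sub>R b + mu *\<^sub>R c"
    using assms unfolding in_segment by blast
  have xc: "x - c = (1 - mu) *\<^sub>R (b - c)" unfolding mu(3) by (simp add: algebra_simps)
  have "cross (d - c) (x - c) = (1 - mu) * cross (d - c) (b - c)" unfolding xc by (simp add: cross_def algebra_simps)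
  then show ?thesis using mu by blast
qed

lemma onseg:
  assumes sg: "cross (d - c) (a - c) * cross (d - c) (b - c) < 0"
    and x1: "x \<in> convex hull {b,c}" and x2: "x \<in> convex hull {a,c,d}"
  shows "x = c"
proof -
  define La where "La = cross (d - c) (a - c)"
  define Lb where "Lb = cross (d - c) (b - c)"
  obtain al where al: "0 \<le> al" "cross (d - c) (x - c) = al * La" using hullL[OF x2] La_def by blast
  obtain mu where mu: "0 \<le> mu" "mu \<le> 1" "x = (1 - mu) *\<^sub>R b + mu *\<^sub>R c"
    "cross (d - c) (x - c) = (1 - mu) * Lb"
    using segL[of x b c d] x1 Lb_def segment_convex_hull by blast
  have sg': "La * Lb < 0" using sg La_def Lb_def by simp
  have eq: "al * La = (1 - mu) * Lb" using al mu by simp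
  have "al * (La * La) = (1 - mu) * (La * Lb)" using eq by (metis mult.assoc mult.commute)
  moreover have "(1 - mu) * (La * Lb) \<le> 0" using mu sg' by (simp add: mult_nonneg_nonpos)
  moreover have "La * La > 0" using sg' by (metis mult_eq_0_iff not_real_square_gt_zero order_less_irrefl)
  ultimately have "al \<le> 0" by (metis mult_le_0_iff not_le)
  then have "al = 0" using al by simp
  then have "(1 - mu) * Lb = 0" using eq by simp
  moreover have "Lb \<noteq> 0" using sg' by auto
  ultimately have "mu = 1" by simp
  then show ?thesis using mu by simp
qed

lemma cover:
  fixes a b c d :: pt
  assumes p1: "p \<in> convex hull {a,b}" and p2: "p \<in> convex hull {c,d}"
  shows "convex hull {a,b,c} \<subseteq> convex hull {a,c,d} \<union> convex hull {b,c,d}"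
proof -
  have pA: "p \<in> convex hull {a,c,d}" using p2 hull_mono[of "{c,d}" "{a,c,d}"] by auto
  have pB: "p \<in> convex hull {b,c,d}" using p2 hull_mono[of "{c,d}" "{b,c,d}"] by auto
  have sA: "convex hull S \<subseteq> convex hull {a,c,d}" if "S \<subseteq> insert p {a,c}" for S
    using that pA by (intro hull_minimal) (auto intro: hull_inc)
  have sB: "convex hull S \<subseteq> convex hull {b,c,d}" if "S \<subseteq> insert p {b,c}" for S
    using that pB by (intro hull_minimal) (auto intro: hull_inc)
  have sA': "convex hull S \<subseteq> convex hull {a,c,d}" if "S \<subseteq> {p,a}" for S
    using sA that by blast
  have sB': "convex hull S \<subseteq> convex hull {b,c,d}" if "S \<subseteq> {p,b}" for S
    using sB that by blast
  have ab: "convex hull {a,b} \<subseteq> convex hull {a,c,d} \<union> convex hull {b,c,d}"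
  proof -
    have "convex hull {a,b} = (\<Union>y\<in>{a,b}. convex hull (insert p ({a,b} - {y})))"
      by (rule convex_hull_exchange_Union[OF p1])
    also have "\<dots> \<subseteq> convex hull {a,c,d} \<union> convex hull {b,c,d}"
    proof (rule UN_least)
      fix y assume "y \<in> {a,b}"
      then have "insert p ({a,b} - {y}) \<subseteq> {p,b} \<or> insert p ({a,b} - {y}) \<subseteq> {p,a}" by auto
      then show "convex hull (insert p ({a,b} - {y})) \<subseteq> convex hull {a,c,d} \<union> convex hull {b,c,d}"
        using sA' sB' by blast
    qed
    finally show ?thesis .
  qed
  have pabc: "p \<in> convex hull {a,b,c}" using p1 hull_mono[of "{a,b}" "{a,b,c}"] by auto
  have "convex hull {a,b,c} = (\<Union>y\<in>{a,b,c}. convex hull (insert p ({a,b,c} - {y})))"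
    by (rule convex_hull_exchange_Union[OF pabc])
  also have "\<dots> \<subseteq> convex hull {a,c,d} \<union> convex hull {b,c,d}"
  proof (rule UN_least)
    fix y assume y: "y \<in> {a,b,c}"
    show "convex hull (insert p ({a,b,c} - {y})) \<subseteq> convex hull {a,c,d} \<union> convex hull {b,c,d}"
    proof (cases "y = c")
      case True
      have "insert p ({a,b,c} - {y}) \<subseteq> convex hull {a,b}" using p1 True by (auto intro: hull_inc)
      then have "convex hull (insert p ({a,b,c} - {y})) \<subseteq> convex hull {a,b}"
        by (intro hull_minimal) auto
      then show ?thesis using ab by blast
    next
      case False
      then have "insert p ({a,b,c} - {y}) \<subseteq> insert p {b,c} \<or> insert p ({a,b,c} - {y}) \<subseteq> insert p {a,c}"
        using y by auto
      then show ?thesis using sA sB by blast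
    qed
  qed
  finally show ?thesis .
qed

lemma hull_Int_sub: "convex hull (s \<inter> t) \<subseteq> convex hull s \<inter> convex hull t"
  by (simp add: hull_mono)

lemma card3_split:
  assumes "card t = 3" "a \<in> t" "b \<in> t" "a \<noteq> b"
  shows "\<exists>e. t = {a,b,e} \<and> e \<noteq> a \<and> e \<noteq> b"
proof -
  have fin: "finite t" using assms(1) card_gt_0_iff by fastforce
  have "card (t - {a,b}) = 1" using assms fin by (simp add: card_Diff_subset)
  then obtain e where e: "t - {a,b} = {e}" by (meson card_1_singletonE)
  then have "t = {a,b,e}" using assms by blast
  then show ?thesis using e by blast
qed

locale qsetup =
  fixes P T a b c d
  assumes T: "is_triangulation P T" and ab: "a \<noteq> b" and cd: "c \<noteq> d"
    and abc: "{a,b,c} \<in> T" and abd: "{a,b,d} \<in> T" and quad: "convex_quad a b c d"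
begin

lemma distinct: "a \<noteq> b" "a \<noteq> c" "b \<noteq> c" "a \<noteq> d" "b \<noteq> d" "c \<noteq> d"
  using tri_distinct[OF tri_mem(2)[OF T abc]] tri_distinct[OF tri_mem(2)[OF T abd]] ab cd by auto

lemma crossing: "\<exists>p. p \<in> closed_segment a b \<and> p \<in> closed_segment c d"
proof -
  have int: "convex hull {a,b,c} \<inter> convex hull {a,b,d} = convex hull {a,b}"
    using tri_int[OF T abc abd] distinct by (simp add: insert_commute)
  have cv: "convex (convex hull {a,b,c} \<union> convex hull {a,b,d})" using quad unfolding convex_quad_def by blast
  have "{c,d} \<subseteq> convex hull {a,b,c} \<union> convex hull {a,b,d}" by (auto intro: hull_inc)
  then have sub: "closed_segment c d \<subseteq> convex hull {a,b,c} \<union> convex hull {a,b,d}"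
    unfolding segment_convex_hull using cv by (simp add: hull_minimal)
  have cl1: "closed (convex hull {a,b,c})" and cl2: "closed (convex hull {a,b,d})"
    by (simp_all add: compact_imp_closed finite_imp_compact_convex_hull)
  have "c \<in> convex hull {a,b,c} \<inter> closed_segment c d" by (auto intro: hull_inc)
  moreover have "d \<in> convex hull {a,b,d} \<inter> closed_segment c d" by (auto intro: hull_inc)
  ultimately have "convex hull {a,b,c} \<inter> convex hull {a,b,d} \<inter> closed_segment c d \<noteq> {}"
    using connected_closedD[OF connected_segment _ sub cl1 cl2] by blast
  then obtain p where "p \<in> convex hull {a,b}" "p \<in> closed_segment c d" using int by blast
  then show ?thesis unfolding segment_convex_hull by blast
qed


lemma swap_ab: "qsetup P T b a c d"
  using T ab cd abc abd quad_swap_ab[OF quad] by unfold_locales (auto simp: insert_commute)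

lemma swap_cd: "qsetup P T a b d c"
  using T ab cd abc abd quad_swap_cd[OF quad] by unfold_locales auto

lemma noncol_acd: "\<not> collinear {a,c,d}"
proof
  assume "collinear {a,c,d}"
  then have "a \<in> convex hull {c,d} \<or> c \<in> convex hull {d,a} \<or> d \<in> convex hull {a,c}"
    unfolding collinear_between_cases between_mem_segment segment_convex_hull .
  moreover have "a \<notin> convex hull {c,d}" by (rule quad_pos[OF quad]) (use distinct in auto)
  moreover have "c \<notin> convex hull {d,a}" by (rule quad_pos[OF quad]) (use distinct in auto)
  moreover have "d \<notin> convex hull {a,c}" by (rule quad_pos[OF quad]) (use distinct in auto)
  ultimately show False by blast
qed

lemma crossing_hull: "\<exists>p. p \<in> convex hull {a,b} \<and> p \<in> convex hull {c,d}"
  using crossing unfolding segment_convex_hull .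

lemma notin_acd: "{a,c,d} \<notin> T"
proof
  assume acd: "{a,c,d} \<in> T"
  obtain p where p1: "p \<in> closed_segment a b" and p2: "p \<in> closed_segment c d" using crossing by blast
  have "{a,c,d} \<inter> {a,b,c} = {a,c}" using distinct by auto
  then have int: "convex hull {a,c,d} \<inter> convex hull {a,b,c} = convex hull {a,c}"
    using tri_int[OF T acd abc] by simp
  have "p \<in> convex hull {a,c,d}" using p2 unfolding segment_convex_hull by (rule hull_mono[THEN subsetD, rotated]) auto
  moreover have "p \<in> convex hull {a,b,c}" using p1 unfolding segment_convex_hull by (rule hull_mono[THEN subsetD, rotated]) auto
  ultimately have "p \<in> closed_segment a c" using int segment_convex_hull by blast
  then obtain u where u: "0 \<le> u" "u \<le> 1" "p = (1 - u) *\<^sub>R a + u *\<^sub>R c" unfolding in_segment by blast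
  have z: "cross (b - a) (p - a) = 0" using seg_cross[OF p1] .
  have nz: "cross (b - a) (c - a) \<noteq> 0" using tri_cross tri_mem[OF T abc] by blast
  have pa: "p - a = u *\<^sub>R (c - a)" using u(3) by (simp add: algebra_simps)
  have "cross (b - a) (p - a) = u * cross (b - a) (c - a)" unfolding pa by (simp add: cross_def algebra_simps)
  then have "u = 0" using z nz by simp
  then have "p = a" using u by simp
  then have "a \<in> convex hull {c,d}" using p2 by (simp add: segment_convex_hull)
  moreover have "a \<notin> convex hull {c,d}" by (rule quad_pos[OF quad]) (use distinct in auto)
  ultimately show False by blast
qed

lemma noncol_bcd: "\<not> collinear {b,c,d}"
  using qsetup.noncol_acd[OF swap_ab] .

lemma notin_bcd: "{b,c,d} \<notin> T"
  using qsetup.notin_acd[OF swap_ab] .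


lemma Lsign: "cross (d - c) (a - c) * cross (d - c) (b - c) < 0"
proof -
  define La where "La = cross (d - c) (a - c)"
  define Lb where "Lb = cross (d - c) (b - c)"
  have La0: "La \<noteq> 0"
  proof
    assume "La = 0"
    then have "collinear {c,d,a}" using cross_zero_collinear[of d c a] La_def by simp
    then show False using noncol_acd by (simp add: insert_commute)
  qed
  have Lb0: "Lb \<noteq> 0"
  proof
    assume "Lb = 0"
    then have "collinear {c,d,b}" using cross_zero_collinear[of d c b] Lb_def by simp
    then show False using noncol_bcd by (simp add: insert_commute)
  qed
  obtain p where p1: "p \<in> closed_segment a b" and p2: "p \<in> closed_segment c d" using crossing by blast
  obtain l where l: "0 \<le> l" "l \<le> 1" "p = (1 - l) *\<^sub>R a + l *\<^sub>R b" using p1 unfolding in_segment by blast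
  have z: "cross (d - c) (p - c) = 0" using seg_cross[OF p2] .
  have pc: "p - c = (1 - l) *\<^sub>R (a - c) + l *\<^sub>R (b - c)" unfolding l(3) by (simp add: algebra_simps)
  have eq: "(1 - l) * La + l * Lb = 0" using z unfolding pc La_def Lb_def by (simp add: cross_def algebra_simps)
  have ac: "a \<notin> convex hull {c,d}" by (rule quad_pos[OF quad]) (use distinct in auto)
  have bc: "b \<notin> convex hull {c,d}" by (rule quad_pos[OF quad]) (use distinct in auto)
  have "l \<noteq> 0" using l ac p2 by (auto simp: segment_convex_hull)
  moreover have "l \<noteq> 1" using l bc p2 by (auto simp: segment_convex_hull)
  ultimately have l0: "0 < l" "l < 1" using l by auto
  have "(1 - l) * (La * La) + l * (La * Lb) = 0" using arg_cong[OF eq, of "\<lambda>z. z * La"]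
    by (simp add: algebra_simps)
  moreover have "(1 - l) * (La * La) > 0" using l0 La0 by (auto simp add: zero_less_mult_iff linorder_neq_iff)
  ultimately have "l * (La * Lb) < 0" by linarith
  then show ?thesis using l0 La_def Lb_def by (simp add: mult_less_0_iff)
qed

lemma newnew: "convex hull {a,c,d} \<inter> convex hull {b,c,d} \<subseteq> convex hull {c,d}"
proof
  fix x assume x: "x \<in> convex hull {a,c,d} \<inter> convex hull {b,c,d}"
  define La where "La = cross (d - c) (a - c)"
  define Lb where "Lb = cross (d - c) (b - c)"
  obtain al where al: "0 \<le> al" "cross (d - c) (x - c) = al * La" "al = 0 \<longrightarrow> x \<in> closed_segment c d"
    using hullL[of x a c d] x La_def by blast
  obtain be where be: "0 \<le> be" "cross (d - c) (x - c) = be * Lb"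
    using hullL[of x b c d] x Lb_def by blast
  have sg: "La * Lb < 0" using Lsign La_def Lb_def by simp
  have eq: "al * La = be * Lb" using al be by simp
  have "al * (La * La) = be * (La * Lb)" using eq by (metis mult.assoc mult.commute)
  moreover have "be * (La * Lb) \<le> 0" using be sg by (simp add: mult_nonneg_nonpos)
  moreover have "La * La > 0" using sg by (metis mult_eq_0_iff not_real_square_gt_zero order_less_irrefl)
  ultimately have "al \<le> 0" by (metis mult_le_0_iff not_le)
  then have "al = 0" using al by simp
  then show "x \<in> convex hull {c,d}" using al by (simp add: segment_convex_hull)
qed

lemma acd_sub: "convex hull {a,c,d} \<subseteq> convex hull {a,b,c} \<union> convex hull {a,b,d}"
  using quad unfolding convex_quad_def by (intro hull_minimal) (auto intro: hull_inc)

lemma abc_sub: "convex hull {a,b,c} \<subseteq> convex hull {a,c,d} \<union> convex hull {b,c,d}"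
  using crossing_hull cover by blast

lemma side:
  assumes t': "t' \<in> T" "t' \<noteq> {a,b,c}" "t' \<noteq> {a,b,d}"
    and x1: "x \<in> convex hull {a,b,c}" and x2: "x \<in> convex hull t'" and x3: "x \<in> convex hull {a,c,d}"
  shows "x \<in> convex hull ({a,c,d} \<inter> t')"
proof -
  have x: "x \<in> convex hull ({a,b,c} \<inter> t')" using tri_int[OF T abc t'(1)] x1 x2 by blast
  show ?thesis
  proof (cases "b \<in> t'")
    case False
    then have "{a,b,c} \<inter> t' \<subseteq> {a,c,d} \<inter> t'" by auto
    then show ?thesis using x hull_mono by blast
  next
    case True
    have "a \<notin> t'"
    proof
      assume "a \<in> t'"
      then obtain e where e: "t' = {a,b,e}" "e \<noteq> a" "e \<noteq> b"
        using card3_split[OF tri_mem(2)[OF T t'(1)]] True ab by blast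
      then have "e \<noteq> c" "e \<noteq> d" using t' by auto
      then show False using three_tri_false[OF T abc abd, of e] e t'(1) distinct by auto
    qed
    then have sub: "{a,b,c} \<inter> t' \<subseteq> {b,c}" by auto
    then have "x \<in> convex hull {b,c}" using x hull_mono by blast
    then have xc: "x = c" using onseg[OF Lsign] x3 by blast
    show ?thesis
    proof (cases "c \<in> t'")
      case True
      then show ?thesis using xc by (auto intro: hull_inc)
    next
      case False
      then have "{a,b,c} \<inter> t' \<subseteq> {b}" using sub by auto
      then have "x \<in> convex hull {b}" using x hull_mono by blast
      then show ?thesis using xc distinct by simp
    qed
  qed
qed

lemma newold:
  assumes t': "t' \<in> T" "t' \<noteq> {a,b,c}" "t' \<noteq> {a,b,d}"
  shows "convex hull {a,c,d} \<inter> convex hull t' = convex hull ({a,c,d} \<inter> t')"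
proof
  show "convex hull ({a,c,d} \<inter> t') \<subseteq> convex hull {a,c,d} \<inter> convex hull t'" by (rule hull_Int_sub)
  show "convex hull {a,c,d} \<inter> convex hull t' \<subseteq> convex hull ({a,c,d} \<inter> t')"
  proof
    fix x assume x: "x \<in> convex hull {a,c,d} \<inter> convex hull t'"
    then have "x \<in> convex hull {a,b,c} \<or> x \<in> convex hull {a,b,d}" using acd_sub by blast
    then show "x \<in> convex hull ({a,c,d} \<inter> t')"
    proof
      assume "x \<in> convex hull {a,b,c}"
      then show ?thesis using side[OF t'] x by blast
    next
      assume "x \<in> convex hull {a,b,d}"
      moreover have "x \<in> convex hull {a,d,c}" using x by (simp add: insert_commute)
      ultimately have "x \<in> convex hull ({a,d,c} \<inter> t')"
        using qsetup.side[OF swap_cd, of t' x] t' x by blast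
      then show ?thesis by (simp add: insert_commute)
    qed
  qed
qed


lemma flip_tri: "is_triangulation P ((T - {{a,b,c},{a,b,d}}) \<union> {{a,c,d},{b,c,d}})"
proof -
  define T' where "T' = (T - {{a,b,c},{a,b,d}}) \<union> {{a,c,d},{b,c,d}}"
  have fin: "finite P" using T unfolding is_triangulation_def by simp
  have Pabc: "{a,b,c} \<subseteq> P" and Pabd: "{a,b,d} \<subseteq> P" using tri_mem[OF T abc] tri_mem[OF T abd] by auto
  have acd_ok: "{a,c,d} \<subseteq> P \<and> card {a,c,d} = 3 \<and> \<not> affine_dependent {a,c,d}"
    using Pabc Pabd distinct noncol_acd collinear_3_eq_affine_dependent by auto
  have bcd_ok: "{b,c,d} \<subseteq> P \<and> card {b,c,d} = 3 \<and> \<not> affine_dependent {b,c,d}"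
    using Pabc Pabd distinct noncol_bcd collinear_3_eq_affine_dependent by auto
  have c1: "\<forall>t\<in>T'. t \<subseteq> P \<and> card t = 3 \<and> \<not> affine_dependent t"
    using acd_ok bcd_ok T unfolding T'_def is_triangulation_def by auto
  have bcd_sub: "convex hull {b,c,d} \<subseteq> convex hull {a,b,c} \<union> convex hull {a,b,d}"
    using qsetup.acd_sub[OF swap_ab] by (simp add: insert_commute)
  have abd_sub: "convex hull {a,b,d} \<subseteq> convex hull {a,c,d} \<union> convex hull {b,c,d}"
    using qsetup.abc_sub[OF swap_cd] by (simp add: insert_commute)
  have "(\<Union>t\<in>T'. convex hull t) = (\<Union>t\<in>T. convex hull t)"
  proof
    show "(\<Union>t\<in>T'. convex hull t) \<subseteq> (\<Union>t\<in>T. convex hull t)"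
      using acd_sub bcd_sub abc abd unfolding T'_def by blast
    show "(\<Union>t\<in>T. convex hull t) \<subseteq> (\<Union>t\<in>T'. convex hull t)"
    proof
      fix x assume "x \<in> (\<Union>t\<in>T. convex hull t)"
      then obtain t where t: "t \<in> T" "x \<in> convex hull t" by blast
      show "x \<in> (\<Union>t\<in>T'. convex hull t)"
      proof (cases "t = {a,b,c} \<or> t = {a,b,d}")
        case True
        then have "x \<in> convex hull {a,c,d} \<union> convex hull {b,c,d}" using abc_sub abd_sub t by blast
        then show ?thesis unfolding T'_def by blast
      next
        case False
        then show ?thesis using t unfolding T'_def by blast
      qed
    qed
  qed
  then have c2: "(\<Union>t\<in>T'. convex hull t) = convex hull P" using T unfolding is_triangulation_def by simp
  have nn: "convex hull {a,c,d} \<inter> convex hull {b,c,d} = convex hull ({a,c,d} \<inter> {b,c,d})"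
  proof
    have "{a,c,d} \<inter> {b,c,d} = {c,d}" using distinct by auto
    then show "convex hull {a,c,d} \<inter> convex hull {b,c,d} \<subseteq> convex hull ({a,c,d} \<inter> {b,c,d})"
      using newnew by simp
  qed (rule hull_Int_sub)
  have no_acd: "t' \<in> T - {{a,b,c},{a,b,d}} \<Longrightarrow>
      convex hull {a,c,d} \<inter> convex hull t' = convex hull ({a,c,d} \<inter> t')" for t'
    using newold by blast
  have no_bcd: "t' \<in> T - {{a,b,c},{a,b,d}} \<Longrightarrow>
      convex hull {b,c,d} \<inter> convex hull t' = convex hull ({b,c,d} \<inter> t')" for t'
    using qsetup.newold[OF swap_ab, of t'] by (auto simp: insert_commute)
  have c3: "\<forall>t\<in>T'. \<forall>t'\<in>T'. convex hull t \<inter> convex hull t' = convex hull (t \<inter> t')"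
  proof (intro ballI)
    fix t t' assume t: "t \<in> T'" and t': "t' \<in> T'"
    show "convex hull t \<inter> convex hull t' = convex hull (t \<inter> t')"
    proof (cases "t \<in> T - {{a,b,c},{a,b,d}}")
      case tT: True
      show ?thesis
      proof (cases "t' \<in> T - {{a,b,c},{a,b,d}}")
        case True
        then show ?thesis using tT tri_int[OF T] by blast
      next
        case False
        then have "t' = {a,c,d} \<or> t' = {b,c,d}" using t' unfolding T'_def by blast
        then show ?thesis using no_acd[OF tT] no_bcd[OF tT] Int_commute[of "convex hull t"] Int_commute[of t] by metis
      qed
    next
      case tF: False
      then have tt: "t = {a,c,d} \<or> t = {b,c,d}" using t unfolding T'_def by blast
      show ?thesis
      proof (cases "t' \<in> T - {{a,b,c},{a,b,d}}")
        case True
        then show ?thesis using tt no_acd[OF True] no_bcd[OF True] by blast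
      next
        case False
        then have "t' = {a,c,d} \<or> t' = {b,c,d}" using t' unfolding T'_def by blast
        then show ?thesis using tt nn Int_commute[of "convex hull {a,c,d}"] Int_commute[of "{a,c,d}"] by fastforce
      qed
    qed
  qed
  have c4: "\<Union>T' = P"
  proof -
    have "\<Union>T = P" using T unfolding is_triangulation_def by simp
    moreover have "\<Union>T' = \<Union>T"
    proof
      have "{a,c,d} \<subseteq> \<Union>T" "{b,c,d} \<subseteq> \<Union>T" using abc abd by blast+
      then show "\<Union>T' \<subseteq> \<Union>T" unfolding T'_def by blast
      show "\<Union>T \<subseteq> \<Union>T'"
      proof
        fix v assume "v \<in> \<Union>T"
        then obtain t where t: "t \<in> T" "v \<in> t" by blast
        show "v \<in> \<Union>T'"
        proof (cases "t \<in> {{a,b,c},{a,b,d}}")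
          case True
          then have "v \<in> {a,b,c,d}" using t by blast
          moreover have "{a,c,d} \<in> T'" "{b,c,d} \<in> T'" unfolding T'_def by auto
          ultimately show ?thesis by blast
        next
          case False
          then show ?thesis using t unfolding T'_def by blast
        qed
      qed
    qed
    ultimately show ?thesis by simp
  qed
  show ?thesis using fin c1 c2 c3 c4 unfolding is_triangulation_def T'_def by blast
qed

end


lemma third_tri:
  assumes T: "is_triangulation P T" and abc: "{a,b,c} \<in> T" and abd: "{a,b,d} \<in> T"
    and cd: "c \<noteq> d" and abx: "{a,b,x} \<in> T"
  shows "x = c \<or> x = d"
  using three_tri_false[OF T abc abd abx] cd by blast

lemma new_diag_eq:
  assumes q: "qsetup P T a b c d"
  shows "new_diag T {a,b} = {c,d}"
  unfolding new_diag_def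
proof (rule the_equality)
  show "\<exists>a' b' c' d'. {a,b} = {a',b'} \<and> a' \<noteq> b' \<and> c' \<noteq> d' \<and> {a',b',c'} \<in> T \<and> {a',b',d'} \<in> T \<and> {c,d} = {c',d'}"
    using qsetup.ab[OF q] qsetup.cd[OF q] qsetup.abc[OF q] qsetup.abd[OF q]
    by (intro exI[of _ a] exI[of _ b] exI[of _ c] exI[of _ d]) simp
next
  fix g assume "\<exists>a' b' c' d'. {a,b} = {a',b'} \<and> a' \<noteq> b' \<and> c' \<noteq> d' \<and> {a',b',c'} \<in> T \<and> {a',b',d'} \<in> T \<and> g = {c',d'}"
  then obtain a' b' c' d' where w: "{a,b} = {a',b'}" "c' \<noteq> d'" "{a',b',c'} \<in> T" "{a',b',d'} \<in> T" "g = {c',d'}"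
    by blast
  have e1: "{a',b',c'} = {a,b,c'}" using w(1) by auto
  have e2: "{a',b',d'} = {a,b,d'}" using w(1) by auto
  have "c' = c \<or> c' = d" using third_tri[OF qsetup.T[OF q] qsetup.abc[OF q] qsetup.abd[OF q] qsetup.cd[OF q]] w(3) e1 by simp
  moreover have "d' = c \<or> d' = d" using third_tri[OF qsetup.T[OF q] qsetup.abc[OF q] qsetup.abd[OF q] qsetup.cd[OF q]] w(4) e2 by simp
  ultimately show "g = {c,d}" using w(2) w(5) by auto
qed

locale frun =
  fixes P :: "pt set" and Ts :: "pt set set list" and n :: nat and A B C D :: "nat \<Rightarrow> pt"
  assumes len: "length Ts = n + 1"
    and tri: "\<And>i. i \<le> n \<Longrightarrow> is_triangulation P (Ts!i)"
    and wit: "\<And>i. i < n \<Longrightarrow> qsetup P (Ts!i) (A i) (B i) (C i) (D i)"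
    and step: "\<And>i. i < n \<Longrightarrow> Ts!(Suc i) = (Ts!i - {{A i,B i,C i},{A i,B i,D i}}) \<union> {{A i,C i,D i},{B i,C i,D i}}"
begin

definition Cs :: "nat \<Rightarrow> pt set set" where "Cs i = {{A i,B i,C i},{A i,B i,D i}}"
definition Ns :: "nat \<Rightarrow> pt set set" where "Ns i = {{A i,C i,D i},{B i,C i,D i}}"

lemma Cs_sub: "i < n \<Longrightarrow> Cs i \<subseteq> Ts!i"
  using qsetup.abc[OF wit] qsetup.abd[OF wit] unfolding Cs_def by auto

lemma Ns_disj: "i < n \<Longrightarrow> Ns i \<inter> Ts!i = {}"
  using qsetup.notin_acd[OF wit] qsetup.notin_bcd[OF wit] unfolding Ns_def by auto

lemma CN: "i < n \<Longrightarrow> Cs i \<inter> Ns i = {}"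
  using Cs_sub Ns_disj by blast

lemma stepeq: "i < n \<Longrightarrow> Ts!(Suc i) = (Ts!i - Cs i) \<union> Ns i"
  using step unfolding Cs_def Ns_def by simp

definition birth :: "nat \<Rightarrow> pt set \<Rightarrow> bool" where
  "birth b t \<longleftrightarrow> b \<le> n \<and> ((b = 0 \<and> t \<in> Ts!0) \<or> (0 < b \<and> t \<in> Ns (b - 1)))"

definition nocons :: "nat \<Rightarrow> pt set \<Rightarrow> nat \<Rightarrow> bool" where
  "nocons b t k \<longleftrightarrow> (\<forall>j. b \<le> j \<and> j < k \<longrightarrow> t \<notin> Cs j)"

definition cons :: "nat \<Rightarrow> pt set \<Rightarrow> nat \<Rightarrow> bool" where
  "cons b t i \<longleftrightarrow> b \<le> i \<and> i < n \<and> t \<in> Cs i \<and> nocons b t i"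

definition tp :: "nat \<Rightarrow> nat \<Rightarrow> bool" where
  "tp i m \<longleftrightarrow> i < m \<and> m < n \<and> (\<exists>t\<in>Cs m. t \<in> Ns i \<and> nocons (Suc i) t m)"

lemma alive:
  assumes "birth b t" "nocons b t k" "b \<le> k" "k \<le> n"
  shows "t \<in> Ts!k"
  using assms(2-4)
proof (induction k)
  case 0
  then show ?case using assms(1) unfolding birth_def by auto
next
  case (Suc k)
  show ?case
  proof (cases "b = Suc k")
    case True
    then have "t \<in> Ns k" using assms(1) unfolding birth_def by auto
    then show ?thesis using stepeq[of k] Suc.prems by auto
  next
    case False
    then have "t \<in> Ts!k" using Suc by (auto simp: nocons_def)
    moreover have "t \<notin> Cs k" using Suc.prems False unfolding nocons_def by auto
    ultimately show ?thesis using stepeq[of k] Suc.prems by auto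
  qed
qed

lemma born:
  assumes "k \<le> n" "t \<in> Ts!k"
  shows "\<exists>b\<le>k. birth b t \<and> nocons b t k"
  using assms
proof (induction k)
  case 0
  then show ?case unfolding birth_def nocons_def by auto
next
  case (Suc k)
  have eq: "Ts!(Suc k) = (Ts!k - Cs k) \<union> Ns k" using stepeq Suc.prems by simp
  show ?case
  proof (cases "t \<in> Ns k")
    case True
    then show ?thesis using Suc.prems unfolding birth_def nocons_def by (intro exI[of _ "Suc k"]) auto
  next
    case False
    then have "t \<in> Ts!k" "t \<notin> Cs k" using Suc.prems eq by auto
    then obtain b where "b \<le> k" "birth b t" "nocons b t k" using Suc by auto
    then show ?thesis using \<open>t \<notin> Cs k\<close> unfolding nocons_def
      by (intro exI[of _ b]) (auto simp: less_Suc_eq)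
  qed
qed

lemma cons_unique: "cons b t i \<Longrightarrow> cons b t j \<Longrightarrow> i = j"
  unfolding cons_def nocons_def by (metis linorder_neq_iff)

lemma first_cons:
  assumes "b \<le> j" "j < n" "t \<in> Cs j"
  shows "\<exists>i. cons b t i"
proof -
  define i where "i = (LEAST j. b \<le> j \<and> j < n \<and> t \<in> Cs j)"
  have i: "b \<le> i \<and> i < n \<and> t \<in> Cs i" using LeastI[of "\<lambda>j. b \<le> j \<and> j < n \<and> t \<in> Cs j"] assms i_def by blast
  have "nocons b t i"
    unfolding nocons_def
  proof (intro allI impI)
    fix j' assume j': "b \<le> j' \<and> j' < i"
    show "t \<notin> Cs j'"
    proof
      assume "t \<in> Cs j'"
      then have "i \<le> j'" unfolding i_def using j' i by (intro Least_le) auto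
      then show False using j' by simp
    qed
  qed
  then show ?thesis using i unfolding cons_def by blast
qed

definition Occ :: "nat set \<Rightarrow> (nat \<times> pt set) set" where
  "Occ S = {(b,t). birth b t \<and> (b = 0 \<or> b - 1 \<in> S) \<and> (\<forall>i. cons b t i \<longrightarrow> i \<notin> S)}"

definition TS :: "nat set \<Rightarrow> pt set set" where "TS S = snd ` Occ S"

definition down :: "nat set \<Rightarrow> bool" where "down S \<longleftrightarrow> (\<forall>i\<in>S. \<forall>j. tp j i \<longrightarrow> j \<in> S)"

lemma TS_empty: "TS {} = Ts!0"
proof
  show "TS {} \<subseteq> Ts!0" unfolding TS_def Occ_def birth_def by auto
  show "Ts!0 \<subseteq> TS {}"
  proof
    fix t assume "t \<in> Ts!0"
    then have "(0,t) \<in> Occ {}" unfolding Occ_def birth_def by auto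
    then show "t \<in> TS {}" unfolding TS_def by force
  qed
qed

lemma inj_empty: "inj_on snd (Occ {})"
  unfolding Occ_def birth_def inj_on_def by auto

lemma TS_all: "TS {..<n} = Ts!n"
proof
  show "TS {..<n} \<subseteq> Ts!n"
  proof
    fix t assume "t \<in> TS {..<n}"
    then obtain b where o: "(b,t) \<in> Occ {..<n}" unfolding TS_def by force
    then have bt: "birth b t" and nc: "\<forall>i. cons b t i \<longrightarrow> i \<notin> {..<n}" unfolding Occ_def by auto
    have "nocons b t n"
      unfolding nocons_def
    proof (intro allI impI)
      fix j assume "b \<le> j \<and> j < n"
      then show "t \<notin> Cs j" using first_cons[of b j t] nc unfolding cons_def by blast
    qed
    moreover have "b \<le> n" using bt unfolding birth_def by simp
    ultimately show "t \<in> Ts!n" using alive[OF bt] by simp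
  qed
  show "Ts!n \<subseteq> TS {..<n}"
  proof
    fix t assume "t \<in> Ts!n"
    then obtain b where b: "b \<le> n" "birth b t" "nocons b t n" using born by blast
    have "(b,t) \<in> Occ {..<n}"
      unfolding Occ_def using b unfolding cons_def nocons_def by auto
    then show "t \<in> TS {..<n}" unfolding TS_def by force
  qed
qed


lemma step_main:
  assumes dn: "down S" and mS: "m \<notin> S" and mn: "m < n" and pred: "\<And>j. tp j m \<Longrightarrow> j \<in> S"
    and inj: "inj_on snd (Occ S)" and triS: "is_triangulation P (TS S)"
  shows "Cs m \<subseteq> TS S" "TS (insert m S) = (TS S - Cs m) \<union> Ns m"
    "inj_on snd (Occ (insert m S))" "down (insert m S)"
    "is_triangulation P (TS (insert m S))" "flip_step (TS S) {A m, B m} (TS (insert m S))"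
proof -
  have consOcc: "\<exists>b. (b,t) \<in> Occ S \<and> cons b t m" if t: "t \<in> Cs m" for t
  proof -
    have "t \<in> Ts!m" using Cs_sub[OF mn] t by blast
    then obtain b where b: "b \<le> m" "birth b t" "nocons b t m" using born[of m t] mn by auto
    have cb: "cons b t m" using b t mn unfolding cons_def by simp
    have "b = 0 \<or> b - 1 \<in> S"
    proof (cases "b = 0")
      case False
      then have "t \<in> Ns (b - 1)" using b unfolding birth_def by simp
      then have "tp (b - 1) m" unfolding tp_def using False b t mn by (intro conjI bexI[of _ t]) auto
      then show ?thesis using pred by blast
    qed simp
    moreover have "\<forall>i. cons b t i \<longrightarrow> i \<notin> S" using cons_unique[OF cb] mS by blast
    ultimately show ?thesis using b cb unfolding Occ_def by blast
  qed
  show Csub: "Cs m \<subseteq> TS S"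
  proof
    fix t assume "t \<in> Cs m"
    then obtain b where "(b,t) \<in> Occ S" using consOcc by blast
    then show "t \<in> TS S" unfolding TS_def by force
  qed
  have W: "qsetup P (Ts!m) (A m) (B m) (C m) (D m)" using wit[OF mn] .
  have qs: "qsetup P (TS S) (A m) (B m) (C m) (D m)"
    using triS qsetup.ab[OF W] qsetup.cd[OF W] qsetup.quad[OF W] Csub unfolding Cs_def
    by unfold_locales auto
  have NnotTS: "Ns m \<inter> TS S = {}"
    using qsetup.notin_acd[OF qs] qsetup.notin_bcd[OF qs] unfolding Ns_def by auto
  have occ_old: "(b,t) \<in> Occ S" if "(b,t) \<in> Occ (insert m S)" "b \<noteq> Suc m" for b t
    using that unfolding Occ_def by auto
  have occ_new: "(Suc m, t) \<in> Occ (insert m S)" if t: "t \<in> Ns m" for t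
  proof -
    have "birth (Suc m) t" using t mn unfolding birth_def by simp
    moreover have "i \<notin> insert m S" if c: "cons (Suc m) t i" for i
    proof
      assume "i \<in> insert m S"
      moreover have "i \<noteq> m" using c unfolding cons_def by simp
      ultimately have iS: "i \<in> S" by simp
      have "tp m i" using c t unfolding tp_def cons_def by auto
      then show False using dn iS mS unfolding down_def by blast
    qed
    ultimately show ?thesis unfolding Occ_def by auto
  qed
  have occ_keep: "(b,t) \<in> Occ (insert m S)" if "(b,t) \<in> Occ S" "\<not> cons b t m" for b t
    using that unfolding Occ_def by auto
  show TSeq: "TS (insert m S) = (TS S - Cs m) \<union> Ns m"
  proof
    show "TS (insert m S) \<subseteq> (TS S - Cs m) \<union> Ns m"
    proof
      fix t assume "t \<in> TS (insert m S)"
      then obtain b where o: "(b,t) \<in> Occ (insert m S)" unfolding TS_def by force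
      show "t \<in> (TS S - Cs m) \<union> Ns m"
      proof (cases "b = Suc m")
        case True
        then show ?thesis using o unfolding Occ_def birth_def by auto
      next
        case False
        then have oS: "(b,t) \<in> Occ S" using occ_old o by blast
        have "t \<notin> Cs m"
        proof
          assume "t \<in> Cs m"
          then obtain b' where b': "(b',t) \<in> Occ S" "cons b' t m" using consOcc by blast
          then have "b' = b" using inj oS unfolding inj_on_def by force
          then show False using b' o unfolding Occ_def by auto
        qed
        moreover have "t \<in> TS S" using oS unfolding TS_def by force
        ultimately show ?thesis by blast
      qed
    qed
    show "(TS S - Cs m) \<union> Ns m \<subseteq> TS (insert m S)"
    proof
      fix t assume t: "t \<in> (TS S - Cs m) \<union> Ns m"
      show "t \<in> TS (insert m S)"
      proof (cases "t \<in> Ns m")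
        case True
        then show ?thesis using occ_new unfolding TS_def by force
      next
        case False
        then have "t \<in> TS S" "t \<notin> Cs m" using t by auto
        then obtain b where "(b,t) \<in> Occ S" unfolding TS_def by force
        moreover have "\<not> cons b t m" using \<open>t \<notin> Cs m\<close> unfolding cons_def by simp
        ultimately have "(b,t) \<in> Occ (insert m S)" using occ_keep by blast
        then show ?thesis unfolding TS_def by force
      qed
    qed
  qed
  show "inj_on snd (Occ (insert m S))"
  proof (rule inj_onI)
    fix x y assume x: "x \<in> Occ (insert m S)" and y: "y \<in> Occ (insert m S)" and e: "snd x = snd y"
    obtain b1 t where x': "x = (b1,t)" by (cases x)
    obtain b2 where y': "y = (b2,t)" using e x' by (cases y) auto
    have new: "t \<in> Ns m" if "b = Suc m" "(b,t) \<in> Occ (insert m S)" for b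
      using that unfolding Occ_def birth_def by auto
    have old: "t \<in> TS S" if "b \<noteq> Suc m" "(b,t) \<in> Occ (insert m S)" for b
      using occ_old[OF that(2) that(1)] unfolding TS_def by force
    show "x = y"
    proof (cases "b1 = Suc m")
      case True
      show ?thesis
      proof (cases "b2 = Suc m")
        case True
        then show ?thesis using \<open>b1 = Suc m\<close> x' y' by simp
      next
        case False
        then show ?thesis using new[OF \<open>b1 = Suc m\<close>] old[OF False] x x' y y' NnotTS by blast
      qed
    next
      case False
      show ?thesis
      proof (cases "b2 = Suc m")
        case True
        then show ?thesis using new[OF True] old[OF False] x x' y y' NnotTS by blast
      next
        case False2: False
        then have "(b1,t) \<in> Occ S" "(b2,t) \<in> Occ S" using occ_old False x x' y y' by auto
        then show ?thesis using inj x' y' unfolding inj_on_def by force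
      qed
    qed
  qed
  show "down (insert m S)" using dn pred unfolding down_def by auto
  show "is_triangulation P (TS (insert m S))"
    using qsetup.flip_tri[OF qs] unfolding TSeq Cs_def Ns_def .
  show "flip_step (TS S) {A m, B m} (TS (insert m S))"
    unfolding flip_step_def TSeq Cs_def Ns_def
    using qsetup.ab[OF qs] qsetup.cd[OF qs] qsetup.abc[OF qs] qsetup.abd[OF qs] qsetup.quad[OF qs]
    by (intro exI[of _ "A m"] exI[of _ "B m"] exI[of _ "C m"] exI[of _ "D m"]) simp
qed

lemma tp_arc:
  assumes lenF: "length F = n" and FA: "\<And>i. i < n \<Longrightarrow> F!i = {A i, B i}" and tp: "tp i m"
  shows "dag_arc F Ts i m"
proof -
  obtain t where t: "i < m" "m < n" "t \<in> Cs m" "t \<in> Ns i" "nocons (Suc i) t m" using tp unfolding tp_def by blast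
  have nd: "new_diag (Ts!i) (F!i) = {C i, D i}" using new_diag_eq[OF wit] FA t by simp
  have bt: "birth (Suc i) t" using t unfolding birth_def by simp
  have al: "t \<in> Ts!k" if "Suc i \<le> k" "k \<le> m" for k
    using alive[OF bt, of k] t that unfolding nocons_def by auto
  have tm: "t \<in> Ts!m" using al t by simp
  have s1: "{A m, B m} \<subseteq> t" using t unfolding Cs_def by auto
  have s2: "{C i, D i} \<subseteq> t" using t unfolding Ns_def by auto
  have c1: "new_diag (Ts!i) (F!i) = F!m \<or> share_triangle (Ts!m) (new_diag (Ts!i) (F!i)) (F!m)"
    unfolding nd share_triangle_def using FA[OF t(2)] tm s1 s2 by blast
  have c2: "\<not> (\<exists>p. i < p \<and> p < m \<and> F!p = new_diag (Ts!i) (F!i))"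
  proof
    assume "\<exists>p. i < p \<and> p < m \<and> F!p = new_diag (Ts!i) (F!i)"
    then obtain p where p: "i < p" "p < m" "F!p = {C i, D i}" unfolding nd by blast
    have pn: "p < n" using p t by simp
    have tp': "t \<in> Ts!p" using al p by simp
    have tnc: "t \<notin> Cs p" using t p unfolding nocons_def by simp
    have W: "qsetup P (Ts!p) (A p) (B p) (C p) (D p)" using wit[OF pn] .
    have eqp: "{A p, B p} = {C i, D i}" using p(3) FA[OF pn] by metis
    have "{A p, B p} \<subseteq> t" unfolding eqp by (rule s2)
    then have sub: "A p \<in> t" "B p \<in> t" by auto
    obtain e where e: "t = {A p, B p, e}" "e \<noteq> A p" "e \<noteq> B p"
      using card3_split[OF tri_mem(2)[OF qsetup.T[OF W] tp'] sub qsetup.ab[OF W]] by blast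
    have ein: "{A p, B p, e} \<in> Ts!p" using tp' e(1) by simp
    have "e = C p \<or> e = D p"
      by (rule third_tri[OF qsetup.T[OF W] qsetup.abc[OF W] qsetup.abd[OF W] qsetup.cd[OF W] ein])
    then have "t \<in> Cs p" unfolding Cs_def e(1) by blast
    then show False using tnc by contradiction
  qed
  have mF: "m < length F" using lenF t by simp
  show ?thesis unfolding dag_arc_def using c1 c2 t(1) mF by blast
qed

end


theorem lemma1:
  fixes P :: "pt set" and T0 :: "pt set set" and F :: "pt set list"
    and Ts :: "pt set set list" and \<sigma> :: "nat \<Rightarrow> nat"
  assumes "is_triangulation P T0"
    and "flip_run P T0 F Ts"
    and "bij_betw \<sigma> {..<length F} {..<length F}"
    and "\<forall>k < length F. \<forall>l < length F. dag_arc F Ts (\<sigma> k) (\<sigma> l) \<longrightarrow> k < l"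
  shows "\<exists>Ts'. flip_run P T0 (map (\<lambda>k. F ! \<sigma> k) [0..<length F]) Ts' \<and> last Ts' = last Ts"
proof -
  define n where "n = length F"
  have lenTs: "length Ts = n + 1" and T00: "Ts!0 = T0"
    and triTs: "\<And>i. i < length Ts \<Longrightarrow> is_triangulation P (Ts!i)"
    and fs: "\<And>i. i < n \<Longrightarrow> flip_step (Ts!i) (F!i) (Ts!(i+1))"
    using assms(2) unfolding flip_run_def n_def by auto
  define Q where "Q i w \<longleftrightarrow> (case w of (a,b,c,d) \<Rightarrow> F!i = {a,b} \<and> a \<noteq> b \<and> c \<noteq> d \<and>
        {a,b,c} \<in> Ts!i \<and> {a,b,d} \<in> Ts!i \<and> convex_quad a b c d \<and>
        Ts!(i+1) = (Ts!i - {{a,b,c},{a,b,d}}) \<union> {{a,c,d},{b,c,d}})" for i w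
  have "\<forall>i\<in>{..<n}. \<exists>w. Q i w"
  proof
    fix i assume "i \<in> {..<n}"
    then obtain a b c d where "F!i = {a,b} \<and> a \<noteq> b \<and> c \<noteq> d \<and>
        {a,b,c} \<in> Ts!i \<and> {a,b,d} \<in> Ts!i \<and> convex_quad a b c d \<and>
        Ts!(i+1) = (Ts!i - {{a,b,c},{a,b,d}}) \<union> {{a,c,d},{b,c,d}}"
      using fs unfolding flip_step_def by fastforce
    then show "\<exists>w. Q i w" unfolding Q_def by (intro exI[of _ "(a,b,c,d)"]) simp
  qed
  then obtain W where W: "\<And>i. i < n \<Longrightarrow> Q i (W i)" using bchoice[of "{..<n}" Q] by auto
  define A where "A i = fst (W i)" for i
  define B where "B i = fst (snd (W i))" for i
  define C where "C i = fst (snd (snd (W i)))" for i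
  define D where "D i = snd (snd (snd (W i)))" for i
  have WQ: "F!i = {A i, B i} \<and> A i \<noteq> B i \<and> C i \<noteq> D i \<and>
        {A i, B i, C i} \<in> Ts!i \<and> {A i, B i, D i} \<in> Ts!i \<and> convex_quad (A i) (B i) (C i) (D i) \<and>
        Ts!(i+1) = (Ts!i - {{A i, B i, C i},{A i, B i, D i}}) \<union> {{A i, C i, D i},{B i, C i, D i}}"
    if "i < n" for i
    using W[OF that] unfolding Q_def A_def B_def C_def D_def by (cases "W i") auto
  have w1: "is_triangulation P (Ts!i)" if "i \<le> n" for i using triTs that lenTs by simp
  have w2: "qsetup P (Ts!i) (A i) (B i) (C i) (D i)" if i: "i < n" for i
  proof (rule qsetup.intro)
    show "is_triangulation P (Ts!i)" using w1 i by simp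
  qed (use WQ[OF i] in auto)
  have w3: "Ts!(Suc i) = (Ts!i - {{A i,B i,C i},{A i,B i,D i}}) \<union> {{A i,C i,D i},{B i,C i,D i}}"
    if "i < n" for i using WQ[OF that] by simp
  interpret fr: frun P Ts n A B C D
    by (rule frun.intro) (use lenTs w1 w2 w3 in auto)
  have FA: "\<And>i. i < n \<Longrightarrow> F!i = {A i, B i}" using WQ by blast
  have bij: "bij_betw \<sigma> {..<n} {..<n}" using assms(3) n_def by simp
  have topo: "\<And>k l. k < n \<Longrightarrow> l < n \<Longrightarrow> dag_arc F Ts (\<sigma> k) (\<sigma> l) \<Longrightarrow> k < l"
    using assms(4) n_def by blast
  define S where "S k = \<sigma> ` {..<k}" for k
  have S0: "S 0 = {}" unfolding S_def by simp
  have SSuc: "S (Suc k) = insert (\<sigma> k) (S k)" for k unfolding S_def by (simp add: lessThan_Suc)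
  have Sn: "S n = {..<n}" unfolding S_def using bij by (simp add: bij_betw_def)
  have stepc: "\<sigma> k < n \<and> \<sigma> k \<notin> S k \<and> (\<forall>j. fr.tp j (\<sigma> k) \<longrightarrow> j \<in> S k)" if kn: "k < n" for k
  proof (intro conjI allI impI)
    show "\<sigma> k < n" using bij kn by (auto simp: bij_betw_def)
    show "\<sigma> k \<notin> S k"
    proof
      assume "\<sigma> k \<in> S k"
      then obtain l where "l < k" "\<sigma> l = \<sigma> k" unfolding S_def by auto
      then show False using bij kn unfolding bij_betw_def inj_on_def by (metis lessThan_iff less_trans less_irrefl)
    qed
    fix j assume tpj: "fr.tp j (\<sigma> k)"
    then have "j < n" unfolding fr.tp_def by simp
    then obtain l where l: "l < n" "j = \<sigma> l" using bij unfolding bij_betw_def by (metis imageE lessThan_iff)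
    have "dag_arc F Ts (\<sigma> l) (\<sigma> k)" using fr.tp_arc[OF n_def[symmetric] FA] tpj l by simp
    then have "l < k" using topo l kn by blast
    then show "j \<in> S k" unfolding S_def using l by blast
  qed
  have inv: "fr.down (S k) \<and> inj_on snd (fr.Occ (S k)) \<and> is_triangulation P (fr.TS (S k))" if "k \<le> n" for k
    using that
  proof (induction k)
    case 0
    show ?case unfolding S0 fr.down_def using fr.inj_empty fr.TS_empty fr.tri[of 0] by simp
  next
    case (Suc k)
    then have kn: "k < n" by simp
    have IH: "fr.down (S k)" "inj_on snd (fr.Occ (S k))" "is_triangulation P (fr.TS (S k))" using Suc by auto
    note sc = stepc[OF kn]
    show ?case unfolding SSuc
      using fr.step_main(3,4,5)[OF IH(1) _ _ _ IH(2,3), of "\<sigma> k"] sc by blast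
  qed
  define Ts' where "Ts' = map (\<lambda>k. fr.TS (S k)) [0..<Suc n]"
  have Ts'i: "Ts'!i = fr.TS (S i)" if "i \<le> n" for i
    unfolding Ts'_def using that by (simp del: upt_Suc)
  have run: "flip_run P T0 (map (\<lambda>k. F ! \<sigma> k) [0..<length F]) Ts'"
    unfolding flip_run_def
  proof (intro conjI allI impI)
    show "length Ts' = length (map (\<lambda>k. F ! \<sigma> k) [0..<length F]) + 1" unfolding Ts'_def n_def by simp
    show "Ts'!0 = T0" using Ts'i[of 0] S0 fr.TS_empty T00 by simp
    fix i
    show "is_triangulation P (Ts'!i)" if "i < length Ts'" for i
      using that Ts'i[of i] inv[of i] unfolding Ts'_def by simp
    assume i: "i < length (map (\<lambda>k. F ! \<sigma> k) [0..<length F])"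
    then have iN: "i < n" unfolding n_def by simp
    note sc = stepc[OF iN]
    have IH: "fr.down (S i)" "inj_on snd (fr.Occ (S i))" "is_triangulation P (fr.TS (S i))" using inv[of i] iN by auto
    have "flip_step (fr.TS (S i)) {A (\<sigma> i), B (\<sigma> i)} (fr.TS (insert (\<sigma> i) (S i)))"
      using fr.step_main(6)[OF IH(1) _ _ _ IH(2,3), of "\<sigma> i"] sc by blast
    moreover have "map (\<lambda>k. F ! \<sigma> k) [0..<length F] ! i = {A (\<sigma> i), B (\<sigma> i)}"
      using iN FA[of "\<sigma> i"] sc n_def by simp
    ultimately show "flip_step (Ts'!i) (map (\<lambda>k. F ! \<sigma> k) [0..<length F] ! i) (Ts'!(i+1))"
      using Ts'i[of i] Ts'i[of "Suc i"] iN SSuc by simp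
  qed
  have "last Ts' = Ts'!n" unfolding Ts'_def by (simp add: last_conv_nth del: upt_Suc)
  also have "\<dots> = fr.TS {..<n}" using Ts'i[of n] Sn by simp
  also have "\<dots> = Ts!n" by (rule fr.TS_all)
  also have "\<dots> = last Ts"
  proof -
    have "Ts \<noteq> []" using lenTs by auto
    then show ?thesis using lenTs by (simp add: last_conv_nth)
  qed
  finally show ?thesis using run by blast
qed

end
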